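(* Let $R$ be a ring with unity and involution $*$, and let $a,v\in R$ with $a$ left dual $v$-core invertible. Then there exist $a_1,a_2\in R$ with $va=a_1+a_2$ such that (1) $a_1$ is left dual core invertible, (2) $a_2^2=0$, (3) $a_2^*a_1=0=a_1a_2$. In addition, for any left dual $v$-core inverse $x$ of $a$, the element $x(va)^2$ is left dual core invertible and $x$ is a left dual core inverse of it.
   Context: For $a,v\in R$, $a$ is left dual $v$-core invertible if there exists $x\in R$ such that $axva=a$, $(xva)^*=xva$ and $x^2va=x$; such $x$ is a left dual $v$-core inverse of $a$. An element $y$ is left dual core invertible if there exists $z\in R$ with $yzy=y$, $(zy)^*=zy$ and $z^2y=z$; such $z$ is a left dual core inverse of $y$. *)

theory Defs
  imports Main
begin

class ring_invol = ring_1 +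
  fixes invol :: "'a \<Rightarrow> 'a" ("_\<^sup>\<star>" [1000] 999)
  assumes invol_invol: "(x\<^sup>\<star>)\<^sup>\<star> = x"
    and invol_add: "(x + y)\<^sup>\<star> = x\<^sup>\<star> + y\<^sup>\<star>"
    and invol_mult: "(x * y)\<^sup>\<star> = y\<^sup>\<star> * x\<^sup>\<star>"

definition left_dual_v_core_inverse :: "'a::ring_invol \<Rightarrow> 'a \<Rightarrow> 'a \<Rightarrow> bool" where
  "left_dual_v_core_inverse a v x \<longleftrightarrow>
     a * x * v * a = a \<and> (x * v * a)\<^sup>\<star> = x * v * a \<and> x * x * v * a = x"

definition left_dual_v_core_invertible :: "'a::ring_invol \<Rightarrow> 'a \<Rightarrow> bool" where
  "left_dual_v_core_invertible a v \<longleftrightarrow> (\<exists>x. left_dual_v_core_inverse a v x)"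

definition left_dual_core_inverse :: "'a::ring_invol \<Rightarrow> 'a \<Rightarrow> bool" where
  "left_dual_core_inverse y z \<longleftrightarrow>
     y * z * y = y \<and> (z * y)\<^sup>\<star> = z * y \<and> z * z * y = z"

definition left_dual_core_invertible :: "'a::ring_invol \<Rightarrow> bool" where
  "left_dual_core_invertible y \<longleftrightarrow> (\<exists>z. left_dual_core_inverse y z)"

end

theory Submission
  imports Defs
begin

lemma invol_zero: "(0::'a::ring_invol)\<^sup>\<star> = 0"
  by (metis add_cancel_right_right invol_add)

lemma invol_diff: "((x::'a::ring_invol) - y)\<^sup>\<star> = x\<^sup>\<star> - y\<^sup>\<star>"
  by (metis add_diff_cancel diff_add_cancel invol_add)

theorem theorem3p3:
  fixes a v :: "'a::ring_invol"
  assumes "left_dual_v_core_invertible a v"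
  shows "(\<exists>a1 a2. v * a = a1 + a2 \<and> left_dual_core_invertible a1 \<and> a2 ^ 2 = 0
            \<and> a2\<^sup>\<star> * a1 = 0 \<and> a1 * a2 = 0)
         \<and> (\<forall>x. left_dual_v_core_inverse a v x \<longrightarrow>
               left_dual_core_invertible (x * (v * a) ^ 2)
             \<and> left_dual_core_inverse (x * (v * a) ^ 2) x)"
proof -
  have P2: "left_dual_core_inverse (x * (v * a) ^ 2) x" if h: "left_dual_v_core_inverse a v x" for x
  proof -
    define b where "b = v * a"
    have h1: "a * x * b = a" and h2: "(x * b)\<^sup>\<star> = x * b" and h3: "x * x * b = x"
      using h by (auto simp: left_dual_v_core_inverse_def b_def mult.assoc)
    have bxb: "b * x * b = b" using h1 by (simp add: b_def mult.assoc)
    have "x * b ^ 2 * x * (x * b ^ 2) = x * b * (b * (x * x * b)) * b"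
      by (simp add: power2_eq_square mult.assoc)
    also have "\<dots> = x * b ^ 2" using h3 bxb by (simp add: power2_eq_square mult.assoc)
    finally have e1: "x * b ^ 2 * x * (x * b ^ 2) = x * b ^ 2" .
    have e2: "x * (x * b ^ 2) = x * b" using h3 by (simp add: power2_eq_square mult.assoc[symmetric])
    have "x * x * (x * b ^ 2) = x * (x * x * b) * b" by (simp add: power2_eq_square mult.assoc)
    then have e3: "x * x * (x * b ^ 2) = x" using h3 by simp
    show ?thesis unfolding left_dual_core_inverse_def b_def[symmetric]
      using e1 e2 e3 h2 by simp
  qed
  obtain x where hx: "left_dual_v_core_inverse a v x"
    using assms left_dual_v_core_invertible_def by blast
  define b where "b = v * a"
  define p where "p = x * b"
  have h1: "a * x * b = a" and h2: "p\<^sup>\<star> = p" and h3: "x * x * b = x"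
    using hx by (auto simp: left_dual_v_core_inverse_def b_def p_def mult.assoc)
  have bxb: "b * x * b = b" using h1 by (simp add: b_def mult.assoc)
  have bp: "b * p = b" using bxb by (simp add: p_def mult.assoc)
  have pp: "p * p = p" using bxb by (simp add: p_def mult.assoc)
  have bp2: "b * (p * c) = b * c" for c by (simp add: mult.assoc[symmetric] bp)
  have pbp: "p * b * p = p * b" by (simp add: mult.assoc bp)
  have y: "x * b ^ 2 = p * b" by (simp add: p_def power2_eq_square mult.assoc)
  have c1: "left_dual_core_invertible (p * b)"
    using P2[OF hx] y left_dual_core_invertible_def b_def by metis
  have c2: "(b - p * b) ^ 2 = 0"
  proof -
    have "(b - p * b) ^ 2 = b * b - b * (p * b) - p * b * b + p * b * (p * b)"
      by (simp add: power2_eq_square algebra_simps)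
    also have "\<dots> = 0" by (simp add: bp pbp pp mult.assoc[symmetric])
    finally show ?thesis .
  qed
  have c3: "(b - p * b)\<^sup>\<star> * (p * b) = 0"
  proof -
    have "(b - p * b)\<^sup>\<star> * (p * b) = b\<^sup>\<star> * (p * b) - b\<^sup>\<star> * (p * (p * b))"
      by (simp add: invol_diff invol_mult h2 algebra_simps)
    also have "\<dots> = 0" by (simp add: pp mult.assoc[symmetric])
    finally show ?thesis .
  qed
  have c4: "p * b * (b - p * b) = 0"
    by (simp add: algebra_simps bp bp2)
  have "v * a = p * b + (b - p * b)" by (simp add: b_def)
  with c1 c2 c3 c4 have ex: "\<exists>a1 a2. v * a = a1 + a2 \<and> left_dual_core_invertible a1 \<and> a2 ^ 2 = 0
            \<and> a2\<^sup>\<star> * a1 = 0 \<and> a1 * a2 = 0" by blast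
  show ?thesis using ex P2 left_dual_core_invertible_def by blast
qed

end
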